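(* Let $G$ be a $(2K_2, K_1+P_4)$-free graph. Then $\chi(G)\le \omega(G)+2$.
   Context: All graphs are finite, simple and undirected. $P_n$, $K_n$ denote the path and complete graph on $n$ vertices; $2K_2$ is the disjoint union of two copies of $K_2$; $G_1+G_2$ denotes the join of $G_1$ and $G_2$ (disjoint union plus all edges between them), so $K_1+P_4$ is a vertex adjacent to all vertices of an induced $P_4$. A graph is $\mathcal F$-free if it has no induced subgraph isomorphic to a member of $\mathcal F$. $\chi(G)$ is the chromatic number and $\omega(G)$ the clique number. *)

theory Defs
  imports Main
begin

definition simple_graph :: "'a set \<Rightarrow> ('a \<Rightarrow> 'a \<Rightarrow> bool) \<Rightarrow> bool" where
  "simple_graph V E \<longleftrightarrow> finite V \<and> (\<forall>x y. E x y \<longrightarrow> x \<in> V \<and> y \<in> V)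
     \<and> (\<forall>x y. E x y \<longrightarrow> E y x) \<and> (\<forall>x. \<not> E x x)"

definition has_induced :: "'a set \<Rightarrow> ('a \<Rightarrow> 'a \<Rightarrow> bool) \<Rightarrow> nat \<Rightarrow> (nat \<Rightarrow> nat \<Rightarrow> bool) \<Rightarrow> bool" where
  "has_induced V E n HE \<longleftrightarrow> (\<exists>f. inj_on f {..<n} \<and> f ` {..<n} \<subseteq> V \<and>
     (\<forall>i<n. \<forall>j<n. E (f i) (f j) \<longleftrightarrow> HE i j))"

definition twoK2 :: "nat \<Rightarrow> nat \<Rightarrow> bool" where
  "twoK2 i j \<longleftrightarrow> {i, j} = {0, 1} \<or> {i, j} = {2, 3}"

definition K1_join_P4 :: "nat \<Rightarrow> nat \<Rightarrow> bool" where
  "K1_join_P4 i j \<longleftrightarrow> {i, j} = {0, 1} \<or> {i, j} = {1, 2} \<or> {i, j} = {2, 3}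
     \<or> (i = 4 \<and> j < 4) \<or> (j = 4 \<and> i < 4)"

definition proper_colouring :: "'a set \<Rightarrow> ('a \<Rightarrow> 'a \<Rightarrow> bool) \<Rightarrow> nat \<Rightarrow> ('a \<Rightarrow> nat) \<Rightarrow> bool" where
  "proper_colouring V E k c \<longleftrightarrow> c ` V \<subseteq> {..<k} \<and> (\<forall>x y. E x y \<longrightarrow> c x \<noteq> c y)"

definition chromatic_number :: "'a set \<Rightarrow> ('a \<Rightarrow> 'a \<Rightarrow> bool) \<Rightarrow> nat" where
  "chromatic_number V E = (LEAST k. \<exists>c. proper_colouring V E k c)"

definition is_clique :: "'a set \<Rightarrow> ('a \<Rightarrow> 'a \<Rightarrow> bool) \<Rightarrow> 'a set \<Rightarrow> bool" where
  "is_clique V E K \<longleftrightarrow> K \<subseteq> V \<and> (\<forall>x\<in>K. \<forall>y\<in>K. x \<noteq> y \<longrightarrow> E x y)"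

definition clique_number :: "'a set \<Rightarrow> ('a \<Rightarrow> 'a \<Rightarrow> bool) \<Rightarrow> nat" where
  "clique_number V E = Max (card ` {K. is_clique V E K})"

end

theory Submission imports Defs begin
lemma gemL:
  assumes g: "simple_graph V E" and ng: "\<not> has_induced V E 5 K1_join_P4"
    and ab: "E a b" and bc: "E b c" and cd: "E c d" and "\<not> E a c" "\<not> E a d" "\<not> E b d"
    and "E e a" "E e b" "E e c" "E e d"
  shows False
proof -
  from g have sym: "\<And>x y. E x y \<Longrightarrow> E y x" and irr: "\<And>x. \<not> E x x"
    and inV: "\<And>x y. E x y \<Longrightarrow> x \<in> V \<and> y \<in> V" unfolding simple_graph_def by auto
  define f where "f = (\<lambda>i. [a,b,c,d,e] ! i)"
  have d: "distinct [a,b,c,d,e]" using assms sym irr by auto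
  have "has_induced V E 5 K1_join_P4"
    unfolding has_induced_def
  proof (intro exI conjI)
    show "inj_on f {..<5}" using d unfolding f_def inj_on_def
      by (auto simp: lessThan_def less_Suc_eq numeral_eq_Suc nth_eq_iff_index_eq)
    show "f ` {..<5} \<subseteq> V" using assms inV unfolding f_def
      by (auto simp: less_Suc_eq numeral_eq_Suc)
    show "\<forall>i<5. \<forall>j<5. E (f i) (f j) = K1_join_P4 i j"
      using assms sym irr unfolding f_def K1_join_P4_def
      by (auto simp: less_Suc_eq numeral_eq_Suc doubleton_eq_iff)
  qed
  with ng show False by simp
qed
lemma twoK2L:
  assumes g: "simple_graph V E" and ng: "\<not> has_induced V E 4 twoK2"
    and "E a b" "E c d" "\<not> E a c" "\<not> E a d" "\<not> E b c" "\<not> E b d"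
  shows False
proof -
  from g have sym: "\<And>x y. E x y \<Longrightarrow> E y x" and irr: "\<And>x. \<not> E x x"
    and inV: "\<And>x y. E x y \<Longrightarrow> x \<in> V \<and> y \<in> V" unfolding simple_graph_def by auto
  define f where "f = (\<lambda>i. [a,b,c,d] ! i)"
  have d: "distinct [a,b,c,d]" using assms sym irr by auto
  have "has_induced V E 4 twoK2"
    unfolding has_induced_def
  proof (intro exI conjI)
    show "inj_on f {..<4}" using d unfolding f_def inj_on_def
      by (auto simp: lessThan_def less_Suc_eq numeral_eq_Suc nth_eq_iff_index_eq)
    show "f ` {..<4} \<subseteq> V" using assms inV unfolding f_def
      by (auto simp: less_Suc_eq numeral_eq_Suc)
    show "\<forall>i<4. \<forall>j<4. E (f i) (f j) = twoK2 i j"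
      using assms sym irr unfolding f_def twoK2_def
      by (auto simp: less_Suc_eq numeral_eq_Suc doubleton_eq_iff)
  qed
  with ng show False by simp
qed

theorem corollary3p2:
  fixes V :: "'a set" and E :: "'a \<Rightarrow> 'a \<Rightarrow> bool"
  assumes "simple_graph V E"
    and "\<not> has_induced V E 4 twoK2"
    and "\<not> has_induced V E 5 K1_join_P4"
  shows "chromatic_number V E \<le> clique_number V E + 2"
proof -
  note g = assms(1) and n2 = assms(2) and ng = assms(3)
  from g have sym: "\<And>x y. E x y \<Longrightarrow> E y x" and irr: "\<And>x. \<not> E x x"
    and inV: "\<And>x y. E x y \<Longrightarrow> x \<in> V \<and> y \<in> V" and finV: "finite V"
    unfolding simple_graph_def by auto
  define CL where "CL = {K. is_clique V E K}"
  have finCL: "finite CL" using finV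
    by (rule finite_subset[rotated, OF finite_Pow_iff[THEN iffD2]]) (auto simp: CL_def is_clique_def)
  have "{} \<in> CL" by (simp add: CL_def is_clique_def)
  define \<omega> where "\<omega> = clique_number V E"
  have om: "\<omega> = Max (card ` CL)" by (simp add: \<omega>_def clique_number_def CL_def)
  have le: "card Q \<le> \<omega>" if "is_clique V E Q" for Q
    using that finCL unfolding om CL_def by (intro Max_ge) auto
  obtain K where KC: "is_clique V E K" and cK: "card K = \<omega>"
  proof -
    have "\<omega> \<in> card ` CL" unfolding om using finCL \<open>{} \<in> CL\<close> by (intro Max_in) auto
    then show ?thesis using that by (auto simp: CL_def)
  qed
  have KV: "K \<subseteq> V" and Kadj: "\<And>x y. x \<in> K \<Longrightarrow> y \<in> K \<Longrightarrow> x \<noteq> y \<Longrightarrow> E x y"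
    using KC by (auto simp: is_clique_def)
  have finK: "finite K" using KV finV finite_subset by blast
  have "\<exists>c. proper_colouring V E (\<omega>+2) c"
  proof (cases "\<exists>k1 k2. k1 \<in> K \<and> k2 \<in> K \<and> k1 \<noteq> k2")
    case False
    then have "card K \<le> 1" using finK
      by (auto simp: card_le_Suc0_iff_eq)
    have "\<not> E x y" for x y
    proof
      assume "E x y"
      then have "is_clique V E {x,y}" using inV sym by (auto simp: is_clique_def)
      then have "card {x,y} \<le> \<omega>" by (rule le)
      moreover have "x \<noteq> y" using \<open>E x y\<close> irr by auto
      ultimately show False using \<open>card K \<le> 1\<close> cK by simp
    qed
    then have "proper_colouring V E (\<omega>+2) (\<lambda>_. 0)" by (auto simp: proper_colouring_def)
    then show ?thesis by blast
  next
    case True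
    then obtain k1 k2 where k1: "k1 \<in> K" and k2: "k2 \<in> K" and k12: "k1 \<noteq> k2" by blast
    obtain idx where bij: "bij_betw idx K {0..<\<omega>}" using ex_bij_betw_finite_nat[OF finK] cK by blast
    have idxinj: "\<And>x y. x \<in> K \<Longrightarrow> y \<in> K \<Longrightarrow> idx x = idx y \<Longrightarrow> x = y"
      using bij by (auto simp: bij_betw_def inj_on_def)
    have idxr: "\<And>x. x \<in> K \<Longrightarrow> idx x < \<omega>" using bij by (auto simp: bij_betw_def)
    define M where "M v = {x \<in> K. \<not> E v x}" for v
    define s where "s v = (SOME x. x \<in> M v)" for v
    define Ec where "Ec v \<longleftrightarrow> k1 \<in> M v \<and> M v \<noteq> {k1}" for v
    define c where "c v = (if v \<in> K then idx v else if Ec v then (if k2 \<in> M v then \<omega> else \<omega>+1)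
       else idx (s v))" for v
    have Mne: "M v \<noteq> {}" if "v \<in> V" "v \<notin> K" for v
    proof
      assume "M v = {}"
      then have "is_clique V E (insert v K)" using that KV Kadj sym
        by (auto simp: is_clique_def M_def)
      then have "card (insert v K) \<le> \<omega>" by (rule le)
      then show False using that finK cK by simp
    qed
    have sM: "s v \<in> M v" if "v \<in> V" "v \<notin> K" for v
      using Mne[OF that] unfolding s_def by (metis ex_in_conv someI_ex)
    have MK: "M v \<subseteq> K" for v by (auto simp: M_def)
    have single: False if "u \<in> V" "w \<in> V" "u \<notin> K" "w \<notin> K" "E u w" "M u = {z}" "M w = {z}" for u w z
    proof -
      have zK: "z \<in> K" using that MK by auto
      have "is_clique V E (insert u (insert w (K - {z})))" using that KV Kadj sym
        by (auto simp: is_clique_def M_def)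
      then have "card (insert u (insert w (K - {z}))) \<le> \<omega>" by (rule le)
      moreover have "u \<noteq> w" using that irr by auto
      ultimately show False using that finK cK zK
        by (simp add: card_Diff_singleton)
    qed
    have H: False if "u \<in> V" "w \<in> V" "u \<notin> K" "w \<notin> K" "E u w" "\<not> Ec u" "\<not> Ec w"
      "z \<in> M u" "z \<in> M w" "x \<in> M u" "x \<noteq> z" for u w z x
    proof -
      have xw: "x \<notin> M w"
      proof
        assume "x \<in> M w"
        then show False using that twoK2L[OF g n2, of u w x z] Kadj[of x z]
          by (auto simp: M_def)
      qed
      have "k1 \<notin> M u" using that by (auto simp: Ec_def)
      moreover have "k1 \<notin> M w" using that \<open>k1 \<notin> M u\<close> by (auto simp: Ec_def)
      ultimately show False
        using that xw gemL[OF g ng, of z x w u k1] Kadj[of z x] Kadj[of x k1] Kadj[of z k1] k1 sym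
        by (auto simp: M_def)
    qed
    have "proper_colouring V E (\<omega>+2) c"
      unfolding proper_colouring_def
    proof (intro conjI allI impI)
      show "c ` V \<subseteq> {..<\<omega>+2}"
      proof
        fix y assume "y \<in> c ` V"
        then obtain v where v: "v \<in> V" "y = c v" by blast
        show "y \<in> {..<\<omega>+2}"
        proof (cases "v \<in> K")
          case True then show ?thesis using v idxr[OF True] by (simp add: c_def)
        next
          case False have "s v \<in> K" using sM[OF v(1) False] MK by blast
          then show ?thesis using v False idxr[of "s v"] by (simp add: c_def)

        qed
      qed
    next
      fix u w assume uw: "E u w"
      then have uV: "u \<in> V" and wV: "w \<in> V" using inV by auto
      have case_b: "c a \<noteq> c b" if "a \<in> K" "b \<in> V" "b \<notin> K" "E a b" for a b
      proof (cases "Ec b")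
        case True then show ?thesis using that idxr[OF that(1)] by (auto simp: c_def)
      next
        case False
        have "s b \<in> M b" by (rule sM[OF that(2,3)])
        then have "s b \<in> K" "s b \<noteq> a" using that sym by (auto simp: M_def)
        then show ?thesis using that False idxinj by (auto simp: c_def)
      qed
      show "c u \<noteq> c w"
      proof (cases "u \<in> K")
        case uK: True
        show ?thesis
        proof (cases "w \<in> K")
          case True then show ?thesis using uK uw irr idxinj by (auto simp: c_def)
        next
          case False then show ?thesis using case_b uK wV uw by blast
        qed
      next
        case uK: False
        show ?thesis
        proof (cases "w \<in> K")
          case True then show ?thesis using case_b[of w u] uK uV uw sym by metis
        next
          case wK: False
          show ?thesis
          proof (cases "Ec u")
            case Eu: True
            show ?thesis
            proof (cases "Ec w")
              case Ew: True
              have k1u: "k1 \<in> M u" and k1w: "k1 \<in> M w" using Eu Ew by (auto simp: Ec_def)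
              show ?thesis
              proof
                assume ceq: "c u = c w"
                show False
                proof (cases "k2 \<in> M u")
                  case True
                  then have "k2 \<in> M w" using ceq uK wK Eu Ew by (auto simp: c_def split: if_splits)
                  then show False using True k1u k1w twoK2L[OF g n2, of u w k1 k2] uw Kadj[OF k1 k2 k12]
                    by (auto simp: M_def)
                next
                  case False
                  then have k2w: "k2 \<notin> M w" using ceq uK wK Eu Ew by (auto simp: c_def split: if_splits)
                  obtain x where x: "x \<in> M u" "x \<noteq> k1" using Eu k1u by (auto simp: Ec_def)
                  have xw: "x \<notin> M w"
                  proof
                    assume "x \<in> M w"
                    then show False using x k1u k1w twoK2L[OF g n2, of u w x k1] uw Kadj[of x k1] k1
                      by (auto simp: M_def)
                  qed
                  show False
                    using x xw k1u k1w False k2w uw gemL[OF g ng, of k1 x w u k2] Kadj[of k1 x] Kadj[of x k2]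
                      Kadj[OF k1 k2 k12] k1 k2 sym
                    by (auto simp: M_def)
                qed
              qed
            next
              case Ew: False
              then show ?thesis using Eu uK wK idxr[of "s w"] sM[OF wV wK] MK[of w] by (simp add: c_def subset_iff)
            qed
          next
            case Eu: False
            show ?thesis
            proof (cases "Ec w")
              case Ew: True
              then show ?thesis using Eu uK wK idxr[of "s u"] sM[OF uV uK] MK[of u] by (simp add: c_def subset_iff)
            next
              case Ew: False
              show ?thesis
              proof
                assume "c u = c w"
                then have "idx (s u) = idx (s w)" using uK wK Eu Ew by (simp add: c_def)
                then have zeq: "s u = s w" using idxinj sM[OF uV uK] sM[OF wV wK] MK by blast
                define z where "z = s u"
                have zu: "z \<in> M u" and zw: "z \<in> M w" using sM[OF uV uK] sM[OF wV wK] zeq z_def by auto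
                show False
                proof (cases "M u = {z} \<and> M w = {z}")
                  case True then show False using single[OF uV wV uK wK uw] by blast
                next
                  case False
                  then consider x where "x \<in> M u" "x \<noteq> z" | x where "x \<in> M w" "x \<noteq> z"
                    using zu zw by blast
                  then show False
                  proof cases
                    case (1 x) then show False using H[OF uV wV uK wK uw Eu Ew zu zw] by blast
                  next
                    case (2 x) then show False using H[OF wV uV wK uK sym[OF uw] Ew Eu zw zu] by blast
                  qed
                qed
              qed
            qed
          qed
        qed
      qed
    qed
    then show ?thesis by blast
  qed
  then show ?thesis unfolding chromatic_number_def \<omega>_def by (metis Least_le)
qed

end
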